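(* Consider an $L$-layer network in which, at every layer $i=l,\dots,L$, the activation $X_i$ is passed through a signed $B$-bit clipped quantizer $\mathbb{Q}_i$ with clipping scalar $s_i$ satisfying $\Pr(|X_i|>s_i)>0$. Let $\Delta X_l$ be the true gradient of the loss with respect to $X_l$ and $\Delta^{(\mathrm{STE})}X_l$ its estimate when each $\partial\mathbb{Q}_i(x)/\partial x$ is replaced by the straight-through estimate $1$. Then there exists $\delta>0$ such that $$\frac{\mathrm{Var}\left(\Delta^{(\mathrm{STE})}X_l\right)}{\mathrm{Var}\left(\Delta X_l\right)}\ge(1+\delta)^{L-l}.$$
   Context: The clipped quantizer is $\mathbb{Q}(x)=\mathrm{clip}\big(s\cdot2^{1-B}\,\mathrm{round}(x\,2^{B-1}/s),-s,s\big)$, i.e. equal to $-s$ for $x<-s$, to $s$ for $x>s$, and to the nearest of the equally spaced levels in between otherwise. Its true derivative is taken to be $1$ on the discretization region $|x|\le s$ (small step approximation) and $0$ on the clipping region $|x|>s$. Gradient variances are computed in a second-order back-propagation model: the variance of the back-propagated gradient at layer $l$ equals a common factor times $\prod_{i=l}^{L}\mathbb{E}\big[|g_i(X_i)|^2\big]$, where $g_i$ is the derivative (true or estimated) used for the quantizer at layer $i$. *)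

theory Defs
  imports "HOL-Probability.Probability"
begin

definition clip :: "real \<Rightarrow> real \<Rightarrow> real \<Rightarrow> real" where
  "clip x a b = max a (min b x)"

definition quantizer :: "nat \<Rightarrow> real \<Rightarrow> real \<Rightarrow> real" where
  "quantizer B s x =
     clip (s * 2 powr (1 - real B) * real_of_int (round (x * 2 powr (real B - 1) / s))) (- s) s"

text \<open>True derivative of the quantizer: 1 on the discretization region, 0 on the clipping region.\<close>
definition true_dQ :: "real \<Rightarrow> real \<Rightarrow> real" where
  "true_dQ s x = (if \<bar>x\<bar> \<le> s then 1 else 0)"

definition ste_dQ :: "real \<Rightarrow> real \<Rightarrow> real" where
  "ste_dQ s x = 1"

text \<open>Second-order back-propagation model: variance of the gradient at layer l
  is a common factor C times the product over i = l..L of E[|g_i(X_i)|^2].\<close>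
definition grad_var ::
  "'a measure \<Rightarrow> real \<Rightarrow> (nat \<Rightarrow> real \<Rightarrow> real) \<Rightarrow> (nat \<Rightarrow> 'a \<Rightarrow> real) \<Rightarrow> nat \<Rightarrow> nat \<Rightarrow> real" where
  "grad_var P C g X l L = C * (\<Prod>i\<in>{l..L}. integral\<^sup>L P (\<lambda>\<omega>. \<bar>g i (X i \<omega>)\<bar> ^ 2))"

end

theory Submission
  imports Defs
begin

lemma p_bound:
  fixes P :: "'a measure" and Y :: "'a \<Rightarrow> real" and t :: real
  assumes P: "prob_space P" and Y: "Y \<in> borel_measurable P"
  shows "integral\<^sup>L P (\<lambda>\<omega>. \<bar>true_dQ t (Y \<omega>)\<bar> ^ 2)
           = 1 - measure P {\<omega> \<in> space P. \<bar>Y \<omega>\<bar> > t}"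
proof -
  interpret prob_space P by (rule P)
  have A: "{\<omega> \<in> space P. \<bar>Y \<omega>\<bar> \<le> t} \<in> sets P" using Y by measurable
  have B: "{\<omega> \<in> space P. \<bar>Y \<omega>\<bar> > t} = space P - {\<omega> \<in> space P. \<bar>Y \<omega>\<bar> \<le> t}" by auto
  have "integral\<^sup>L P (\<lambda>\<omega>. \<bar>true_dQ t (Y \<omega>)\<bar> ^ 2)
       = integral\<^sup>L P (indicator {\<omega> \<in> space P. \<bar>Y \<omega>\<bar> \<le> t})"
    by (intro Bochner_Integration.integral_cong) (auto simp: true_dQ_def indicator_def)
  also have "\<dots> = measure P {\<omega> \<in> space P. \<bar>Y \<omega>\<bar> \<le> t}" using A by simp
  also have "\<dots> = 1 - measure P {\<omega> \<in> space P. \<bar>Y \<omega>\<bar> > t}"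
    unfolding B using A prob_compl by simp
  finally show ?thesis .
qed

theorem proposition1:
  fixes P :: "'a measure" and X :: "nat \<Rightarrow> 'a \<Rightarrow> real" and s :: "nat \<Rightarrow> real"
    and C :: real and l L :: nat
  assumes "prob_space P"
    and "l \<le> L"
    and "C > 0"
    and "\<forall>i\<in>{l..L}. X i \<in> borel_measurable P"
    and "\<forall>i\<in>{l..L}. s i > 0"
    and "\<forall>i\<in>{l..L}. measure P {\<omega> \<in> space P. \<bar>X i \<omega>\<bar> > s i} > 0"
  shows "\<exists>\<delta>>0. grad_var P C (\<lambda>i. ste_dQ (s i)) X l L
                 \<ge> (1 + \<delta>) ^ (L - l) * grad_var P C (\<lambda>i. true_dQ (s i)) X l L"
proof -
  interpret prob_space P by (rule assms(1))
  define q where "q i = measure P {\<omega> \<in> space P. \<bar>X i \<omega>\<bar> > s i}" for i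
  define d where "d = Min (q ` {l..L})"
  have ne: "q ` {l..L} \<noteq> {}" using assms(2) by auto
  have dpos: "d > 0" unfolding d_def using ne assms(6) q_def by (subst Min_gr_iff) auto
  have dle: "d \<le> q i" if "i \<in> {l..L}" for i unfolding d_def using that by auto
  have pi: "integral\<^sup>L P (\<lambda>\<omega>. \<bar>true_dQ (s i) (X i \<omega>)\<bar> ^ 2) = 1 - q i"
    if "i \<in> {l..L}" for i using p_bound[OF assms(1)] assms(4) that q_def by auto
  have qle: "q i \<le> 1" for i unfolding q_def by simp
  have ste: "grad_var P C (\<lambda>i. ste_dQ (s i)) X l L = C"
    by (simp add: grad_var_def ste_dQ_def prob_space)
  have tru: "grad_var P C (\<lambda>i. true_dQ (s i)) X l L = C * (\<Prod>i\<in>{l..L}. 1 - q i)"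
    unfolding grad_var_def using pi by (intro arg_cong[where f="\<lambda>x. C * x"] prod.cong) auto
  have each: "0 \<le> (1 + d) * (1 - q i) \<and> (1 + d) * (1 - q i) \<le> 1" if "i \<in> {l..L}" for i
  proof -
    have "(1 + d) * (1 - q i) \<le> (1 + q i) * (1 - q i)"
      using dle[OF that] qle[of i] by (intro mult_right_mono) auto
    also have "\<dots> \<le> 1" by (simp add: algebra_simps)
    finally show ?thesis using dpos qle[of i] by simp
  qed
  have "(\<Prod>i\<in>{l..L}. (1 + d) * (1 - q i)) \<le> (\<Prod>i\<in>{l..L}. 1)"
    by (rule prod_mono) (use each in auto)
  hence P1: "(1 + d) ^ (Suc (L - l)) * (\<Prod>i\<in>{l..L}. 1 - q i) \<le> 1"
    using assms(2) by (simp add: prod.distrib Suc_diff_le)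
  have nn: "0 \<le> (\<Prod>i\<in>{l..L}. 1 - q i)" by (rule prod_nonneg) (use qle in auto)
  have "(1 + d) ^ (L - l) * (\<Prod>i\<in>{l..L}. 1 - q i) \<le> (1 + d) ^ (Suc (L - l)) * (\<Prod>i\<in>{l..L}. 1 - q i)"
    using dpos nn by (intro mult_right_mono) (auto intro: power_increasing)
  with P1 have "(1 + d) ^ (L - l) * (\<Prod>i\<in>{l..L}. 1 - q i) \<le> 1" by linarith
  hence "(1 + d) ^ (L - l) * (C * (\<Prod>i\<in>{l..L}. 1 - q i)) \<le> C"
    using assms(3) by (metis mult.left_commute mult_left_mono mult.right_neutral less_imp_le)
  thus ?thesis using dpos ste tru by auto
qed

end
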